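(* Fix an integer $n\ge 0$. Let $\mu,\nu,\lambda$ be partitions such that $\ell(\mu)>n$, $\ell(\nu)>n$, the border strip $R_\mu$ exists, is nonempty, and $\nu=\mu\setminus R_\mu$, and the border strip $R_\nu$ exists, is nonempty, and $\lambda=\nu\setminus R_\nu$. Then $c(R_\mu)>c(R_\nu)$.
   Context: For a partition $\lambda$ with $\ell(\lambda)>n$ (where $\ell$ is the number of nonzero parts), $R_\lambda$ denotes the border strip (connected skew Young diagram containing no $2\times2$ square) consisting of $2(\ell(\lambda)-n-1)$ boxes along the rim (south-east boundary) of the Young diagram of $\lambda$, starting at the first (leftmost) box of the last row of $\lambda$ and proceeding along the rim, if it exists. $c(R)$ denotes the number of columns occupied by a border strip $R$. *)

theory Defs
  imports Main
begin

text \<open>Boxes of the Young diagram are pairs (row, column),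
  0-indexed, English convention (row 0 on top).\<close>

definition is_partition :: "nat list \<Rightarrow> bool" where
  "is_partition l \<longleftrightarrow> sorted_wrt (\<ge>) l \<and> 0 \<notin> set l"

definition young :: "nat list \<Rightarrow> (nat \<times> nat) set" where
  "young l = {(i, j). i < length l \<and> j < l ! i}"

text \<open>One step along the rim (south-east boundary), going from the bottom-left
  box towards the top-right box: move right if possible, otherwise move up.\<close>

definition rim_next :: "nat list \<Rightarrow> nat \<times> nat \<Rightarrow> nat \<times> nat" where
  "rim_next l = (\<lambda>(i, j). if j + 1 < l ! i then (i, j + 1) else (i - 1, j))"

definition rim_box :: "nat list \<Rightarrow> nat \<Rightarrow> nat \<times> nat" where
  "rim_box l m = (rim_next l ^^ m) (length l - 1, 0)"

text \<open>Total number of boxes on the rim (hook length of the box (0,0)).\<close>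

definition rim_length :: "nat list \<Rightarrow> nat" where
  "rim_length l = (if l = [] then 0 else hd l + length l - 1)"

text \<open>R_lambda (for a given n): the first 2(ell(lambda)-n-1) rim boxes; it exists
  iff the rim has at least that many boxes.\<close>

definition strip_size :: "nat list \<Rightarrow> nat \<Rightarrow> nat" where
  "strip_size l n = 2 * (length l - n - 1)"

definition strip_exists :: "nat list \<Rightarrow> nat \<Rightarrow> bool" where
  "strip_exists l n \<longleftrightarrow> strip_size l n \<le> rim_length l"

definition R_strip :: "nat list \<Rightarrow> nat \<Rightarrow> (nat \<times> nat) set" where
  "R_strip l n = rim_box l ` {..< strip_size l n}"

definition ncols :: "(nat \<times> nat) set \<Rightarrow> nat" where
  "ncols R = card (snd ` R)"

end

theory Submission
  imports Defs
begin

lemma rim_box_0: "rim_box l 0 = (length l - 1, 0)"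
  by (simp add: rim_box_def)

lemma rim_box_Suc: "rim_box l (Suc m) = rim_next l (rim_box l m)"
  by (simp add: rim_box_def)

lemma snd_step: "snd (rim_box l (Suc m)) = snd (rim_box l m) \<or> snd (rim_box l (Suc m)) = Suc (snd (rim_box l m))"
proof -
  obtain i j where "rim_box l m = (i, j)" by fastforce
  then show ?thesis by (simp add: rim_box_Suc rim_next_def)
qed

lemma fst_step: "fst (rim_box l (Suc m)) \<le> fst (rim_box l m)"
proof -
  obtain i j where "rim_box l m = (i, j)" by fastforce
  then show ?thesis by (simp add: rim_box_Suc rim_next_def)
qed

lemma snd_image: "snd ` rim_box l ` {..<Suc k} = {0..snd (rim_box l k)}"
proof (induction k)
  case 0
  have "{..<Suc 0} = {0::nat}" by auto
  then show ?case by (simp add: rim_box_0)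
next
  case (Suc k)
  have "{..<Suc (Suc k)} = insert (Suc k) {..<Suc k}" by auto
  then have "snd ` rim_box l ` {..<Suc (Suc k)} = insert (snd (rim_box l (Suc k))) {0..snd (rim_box l k)}"
    using Suc by (simp add: image_insert)
  then show ?case using snd_step[of l k] by auto
qed

lemma fst_mono: "m \<le> k \<Longrightarrow> fst (rim_box l k) \<le> fst (rim_box l m)"
proof (induction k rule: dec_induct)
  case base
  then show ?case by simp
next
  case (step k)
  then show ?case using fst_step[of l k] by linarith
qed

lemma part_pos: "is_partition l \<Longrightarrow> i < length l \<Longrightarrow> 0 < l ! i"
  unfolding is_partition_def using nth_mem by (metis gr0I)

lemma part_sorted: "is_partition l \<Longrightarrow> i \<le> j \<Longrightarrow> j < length l \<Longrightarrow> l ! j \<le> l ! i"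
  unfolding is_partition_def
  by (metis le_neq_implies_less order_refl sorted_wrt_nth_less)

lemma rim_inv:
  assumes "is_partition l" "l \<noteq> []" "m < rim_length l"
  shows "rim_box l m \<in> young l \<and> fst (rim_box l m) + m = snd (rim_box l m) + length l - 1"
  using assms(3)
proof (induction m)
  case 0
  have "0 < l ! (length l - 1)" using part_pos[OF assms(1)] assms(2) by simp
  then show ?case using assms(2) by (simp add: rim_box_0 young_def)
next
  case (Suc m)
  obtain i j where ij: "rim_box l m = (i, j)" by fastforce
  have IH: "(i, j) \<in> young l" "i + m = j + length l - 1" using Suc ij by auto
  have iL: "i < length l" "j < l ! i" using IH(1) by (auto simp: young_def)
  show ?case
  proof (cases "j + 1 < l ! i")
    case True
    then show ?thesis using IH iL ij by (simp add: rim_box_Suc rim_next_def young_def)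
  next
    case False
    have "i \<noteq> 0"
    proof
      assume "i = 0"
      then have "hd l = l ! i" using assms(2) by (simp add: hd_conv_nth)
      then show False using Suc.prems False IH iL \<open>i = 0\<close> assms(2)
        by (simp add: rim_length_def)
    qed
    then have "l ! i \<le> l ! (i - 1)" using part_sorted[OF assms(1), of "i - 1" i] iL by simp
    then show ?thesis using False IH iL ij \<open>i \<noteq> 0\<close>
      by (simp add: rim_box_Suc rim_next_def young_def) arith
  qed
qed

lemma young_left: "(a, Suc b) \<in> young l \<Longrightarrow> (a, b) \<in> young l"
  by (simp add: young_def)

lemma strip_info:
  assumes "is_partition l" "strip_exists l n" "R_strip l n \<noteq> {}"
    and "young l' = young l - R_strip l n"
  shows "\<exists>a. a < length l \<and> ncols (R_strip l n) = l ! a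
     \<and> strip_size l n + a = l ! a + length l - 1
     \<and> (\<forall>i j. i < a \<longrightarrow> ((i, j) \<in> young l \<longleftrightarrow> (i, j) \<in> young l'))
     \<and> (a, l ! a - 1) \<notin> young l'"
proof -
  define s where "s = strip_size l n"
  have s0: "s > 0" using assms(3) by (force simp: R_strip_def s_def)
  have sle: "s \<le> rim_length l" using assms(2) by (simp add: strip_exists_def s_def)
  have ne: "l \<noteq> []" using s0 sle by (simp add: rim_length_def split: if_splits)
  obtain k where k: "s = Suc k" using s0 by (cases s) auto
  obtain a b where ab: "rim_box l k = (a, b)" by fastforce
  have R: "R_strip l n = rim_box l ` {..<Suc k}" by (simp add: R_strip_def k[unfolded s_def])
  have inv: "(a, b) \<in> young l" "a + k = b + length l - 1"
    using rim_inv[OF assms(1) ne, of k] k sle ab by auto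
  have aL: "a < length l" "b < l ! a" using inv(1) by (auto simp: young_def)
  have abR: "(a, b) \<in> R_strip l n" unfolding R by (rule image_eqI[of _ _ k]) (use ab in auto)
  have notR: "(a, Suc b) \<notin> R_strip l n"
  proof
    assume "(a, Suc b) \<in> R_strip l n"
    then obtain m where m: "m < Suc k" "rim_box l m = (a, Suc b)" using R by auto
    have "fst (rim_box l m) + m = snd (rim_box l m) + length l - 1"
      using rim_inv[OF assms(1) ne, of m] m(1) k sle by auto
    then show False using m inv aL by simp
  qed
  have "\<not> Suc b < l ! a"
  proof
    assume "Suc b < l ! a"
    then have "(a, Suc b) \<in> young l'" using assms(4) notR aL by (simp add: young_def)
    then have "(a, b) \<in> young l'" by (rule young_left)
    then show False using assms(4) abR by simp
  qed
  then have la: "l ! a = Suc b" using aL by simp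
  have nc: "ncols (R_strip l n) = l ! a"
    using snd_image[of l k] R ab la by (simp add: ncols_def)
  have rows: "\<forall>i j. i < a \<longrightarrow> ((i, j) \<in> young l \<longleftrightarrow> (i, j) \<in> young l')"
  proof (intro allI impI)
    fix i j assume ia: "i < a"
    have "(i, j) \<notin> R_strip l n"
    proof
      assume "(i, j) \<in> R_strip l n"
      then obtain m where m: "m < Suc k" "rim_box l m = (i, j)" using R by auto
      have "fst (rim_box l k) \<le> fst (rim_box l m)" using fst_mono[of m k l] m(1) by simp
      then show False using m ab ia by simp
    qed
    then show "(i, j) \<in> young l \<longleftrightarrow> (i, j) \<in> young l'" using assms(4) by auto
  qed
  have "(a, l ! a - 1) \<notin> young l'" using abR la assms(4) by simp
  moreover have "strip_size l n + a = l ! a + length l - 1" using inv la k s_def aL by simp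
  ultimately show ?thesis using aL nc rows by blast
qed

theorem lemma2p1:
  fixes n :: nat and mu nu lam :: "nat list"
  assumes "is_partition mu" and "is_partition nu" and "is_partition lam"
    and "length mu > n" and "length nu > n"
    and "strip_exists mu n" and "R_strip mu n \<noteq> {}"
    and "young nu = young mu - R_strip mu n"
    and "strip_exists nu n" and "R_strip nu n \<noteq> {}"
    and "young lam = young nu - R_strip nu n"
  shows "ncols (R_strip mu n) > ncols (R_strip nu n)"
proof -
  obtain a where A: "a < length mu" "ncols (R_strip mu n) = mu ! a"
     "strip_size mu n + a = mu ! a + length mu - 1"
     "\<forall>i j. i < a \<longrightarrow> ((i, j) \<in> young mu \<longleftrightarrow> (i, j) \<in> young nu)"
     "(a, mu ! a - 1) \<notin> young nu"
    using strip_info[OF assms(1,6,7,8)] by blast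
  obtain a' where B: "a' < length nu" "ncols (R_strip nu n) = nu ! a'"
     "strip_size nu n + a' = nu ! a' + length nu - 1"
    using strip_info[OF assms(2,9,10,11)] by blast
  have "0 < nu ! (length nu - 1)" using part_pos[OF assms(2)] assms(5) by simp
  then have "(length nu - 1, 0) \<in> young nu" using assms(5) by (simp add: young_def)
  then have "(length nu - 1, 0) \<in> young mu" using assms(8) by simp
  then have LL: "length nu \<le> length mu" by (simp add: young_def) linarith
  have mupos: "0 < mu ! a" using part_pos[OF assms(1) A(1)] .
  show ?thesis
  proof (cases "a' < a")
    case True
    have "(a', nu ! a') \<notin> young nu" by (simp add: young_def)
    then have "(a', nu ! a') \<notin> young mu" using A(4) True by blast
    then have "mu ! a' \<le> nu ! a'" using True A(1) by (simp add: young_def)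
    moreover have "mu ! a \<le> mu ! a'" using part_sorted[OF assms(1), of a' a] True A(1) by simp
    ultimately have "mu ! a \<le> nu ! a'" by simp
    then show ?thesis using A(3) B(3) LL True assms(4,5) mupos
      by (simp add: strip_size_def)
  next
    case False
    then have aL: "a < length nu" using B(1) by simp
    have "nu ! a' \<le> nu ! a" using part_sorted[OF assms(2), of a a'] False B(1) by simp
    moreover have "nu ! a \<le> mu ! a - 1" using A(5) aL by (simp add: young_def)
    ultimately show ?thesis using A(2) B(2) mupos by simp
  qed
qed

end
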